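(* Let $G$ be a finite group, $p$ a prime, $P\in\mathrm{Syl}_p(G)$ and $x\in P$. Then $|x^G|\leq |x^G\cap P|\,\nu_p(G)$, with equality if and only if $x$ lies in a unique Sylow $p$-subgroup of $G$. In particular, if $x\in P$ lies in a unique Sylow $p$-subgroup of $G$, then $|x^G|\geq \nu_p(G)|x^P|$.
   Context: $x^G$ (resp. $x^P$) denotes the conjugacy class of $x$ in $G$ (resp. in $P$), $\mathrm{Syl}_p(G)$ the set of Sylow $p$-subgroups of $G$, and $\nu_p(G)=|\mathrm{Syl}_p(G)|$. *)

theory Defs
  imports "HOL-Algebra.Algebra" "HOL-Computational_Algebra.Primes"
begin

definition Syl :: "nat \<Rightarrow> ('a, 'b) monoid_scheme \<Rightarrow> 'a set set" where
  "Syl p G = {P. subgroup P G \<and> card P = p ^ multiplicity p (order G)}"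

definition nu :: "nat \<Rightarrow> ('a, 'b) monoid_scheme \<Rightarrow> nat" where
  "nu p G = card (Syl p G)"

definition conj_class :: "('a, 'b) monoid_scheme \<Rightarrow> 'a \<Rightarrow> 'a set" where
  "conj_class G x = {g \<otimes>\<^bsub>G\<^esub> x \<otimes>\<^bsub>G\<^esub> inv\<^bsub>G\<^esub> g | g. g \<in> carrier G}"

end

theory Submission
  imports Defs
begin

context group begin

definition cosact :: "'a set \<Rightarrow> 'a \<Rightarrow> 'a set \<Rightarrow> 'a set" where
  "cosact Q g = (\<lambda>C \<in> rcosets Q. C #> inv g)"

lemma cosact_bij:
  assumes "subgroup Q G" "g \<in> carrier G"
  shows "cosact Q g \<in> Bij (rcosets Q)"
proof -
  have inj: "\<And>C. C \<in> rcosets Q \<Longrightarrow> C \<subseteq> carrier G"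
    using assms(1) is_group subgroup.rcosets_carrier by blast
  have cl: "\<And>C h. C \<in> rcosets Q \<Longrightarrow> h \<in> carrier G \<Longrightarrow> C #> h \<in> rcosets Q"
    using assms(1) unfolding RCOSETS_def
    by (auto simp: coset_mult_assoc subgroup.subset)
  have bk1: "\<And>C. C \<in> rcosets Q \<Longrightarrow> (C #> inv g) #> g = C"
    using inj assms by (simp add: coset_mult_assoc)
  have bk2: "\<And>C. C \<in> rcosets Q \<Longrightarrow> (C #> g) #> inv g = C"
    using inj assms by (simp add: coset_mult_assoc)
  have "bij_betw (\<lambda>C. C #> inv g) (rcosets Q) (rcosets Q)"
    apply (rule bij_betw_byWitness[where f'="\<lambda>C. C #> g"])
    using bk1 bk2 cl assms by auto
  then have "bij_betw (cosact Q g) (rcosets Q) (rcosets Q)"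
    unfolding cosact_def by (rule bij_betw_cong[THEN iffD1, rotated]) simp
  then show ?thesis unfolding Bij_def cosact_def by auto
qed

lemma cosact_action:
  assumes "subgroup Q G"
  shows "group_action G (rcosets Q) (cosact Q)"
proof -
  have inj: "\<And>C. C \<in> rcosets Q \<Longrightarrow> C \<subseteq> carrier G"
    using assms(1) is_group subgroup.rcosets_carrier by blast
  have cl: "\<And>C h. C \<in> rcosets Q \<Longrightarrow> h \<in> carrier G \<Longrightarrow> C #> h \<in> rcosets Q"
    using assms(1) unfolding RCOSETS_def
    by (auto simp: coset_mult_assoc subgroup.subset)
  have hom: "cosact Q \<in> hom G (BijGroup (rcosets Q))"
  proof (rule homI)
    fix g assume "g \<in> carrier G"
    then show "cosact Q g \<in> carrier (BijGroup (rcosets Q))"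
      using cosact_bij assms by (simp add: BijGroup_def)
  next
    fix g h assume g: "g \<in> carrier G" and h: "h \<in> carrier G"
    have "cosact Q (g \<otimes> h) = compose (rcosets Q) (cosact Q g) (cosact Q h)"
      unfolding cosact_def compose_def
      using g h inj cl by (auto simp: inv_mult_group coset_mult_assoc intro!: restrict_ext)
    then show "cosact Q (g \<otimes> h) = cosact Q g \<otimes>\<^bsub>BijGroup (rcosets Q)\<^esub> cosact Q h"
      using cosact_bij assms g h by (simp add: BijGroup_def)
  qed
  show ?thesis
    unfolding group_action_def group_hom_def group_hom_axioms_def
    using hom group_BijGroup is_group by blast
qed

lemma sylow_conj:
  assumes fin: "finite (carrier G)" and pr: "Factorial_Ring.prime p"
    and P: "subgroup P G" "card P = p ^ multiplicity p (order G)"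
    and Q: "subgroup Q G" "card Q = p ^ multiplicity p (order G)"
  shows "\<exists>g\<in>carrier G. Q = (\<lambda>y. g \<otimes> y \<otimes> inv g) ` P"
proof -
  define a where "a = multiplicity p (order G)"
  define H where "H = G\<lparr>carrier := P\<rparr>"
  define \<phi> where "\<phi> = cosact Q"
  interpret A: group_action H "rcosets Q" \<phi>
    unfolding H_def \<phi>_def using group_action.induced_action[OF cosact_action[OF Q(1)] P(1)] .
  have ordH: "order H = p ^ a" using P(2) by (simp add: H_def order_def a_def)
  have finR: "finite (rcosets Q)"
  proof -
    have "rcosets Q \<subseteq> Pow (carrier G)"
      using Q(1) is_group subgroup.rcosets_carrier by blast
    then show ?thesis using fin finite_subset by blast
  qed
  have ordpos: "order G \<noteq> 0" using fin by (simp add: order_gt_0_iff_finite[symmetric])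
  have lag: "card (rcosets Q) * p ^ a = order G" using lagrange[OF Q(1)] Q(2) a_def by simp
  have ndvd: "\<not> p dvd card (rcosets Q)"
  proof
    assume "p dvd card (rcosets Q)"
    then obtain k where "card (rcosets Q) = p * k" by (auto elim: dvdE)
    then have "order G = p ^ Suc a * k" using lag by (simp add: algebra_simps)
    then have "p ^ Suc a dvd order G" by simp
    then show False using ordpos pr unfolding a_def
      by (meson Suc_n_not_le_n not_prime_unit power_dvd_iff_le_multiplicity)
  qed
  have "\<exists>C\<in>rcosets Q. card (orbit H \<phi> C) = 1"
  proof (rule ccontr)
    assume nc: "\<not> ?thesis"
    have dv: "\<forall>orb\<in>orbits H (rcosets Q) \<phi>. p dvd card orb"
    proof
      fix orb assume "orb \<in> orbits H (rcosets Q) \<phi>"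
      then obtain C where C: "C \<in> rcosets Q" "orb = orbit H \<phi> C" unfolding orbits_def by blast
      have "card orb * card (stabilizer H \<phi> C) = p ^ a" using A.orbit_stabilizer_theorem[OF C(1)] ordH C(2)
        by simp
      then have "card orb dvd p ^ a" by (metis dvd_triv_left)
      moreover have "card orb \<noteq> 1" using nc C by blast
      ultimately show "p dvd card orb" using pr
        by (metis nat_dvd_1_iff_1 divides_primepow_nat prime_factor_nat primes_dvd_imp_eq prime_dvd_power)
    qed
    have "p dvd (\<Sum>orb\<in>orbits H (rcosets Q) \<phi>. \<Sum>x\<in>orb. (1::nat))"
    proof (rule dvd_sum)
      fix orb assume "orb \<in> orbits H (rcosets Q) \<phi>"
      then have "p dvd card orb" using dv by blast
      then show "p dvd (\<Sum>x\<in>orb. (1::nat))" by simp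
    qed
    also have "(\<Sum>orb\<in>orbits H (rcosets Q) \<phi>. \<Sum>x\<in>orb. (1::nat)) = card (rcosets Q)"
      using A.disjoint_sum[OF finR, of "\<lambda>_. 1::nat"] by simp
    finally show False using ndvd by simp
  qed
  then obtain C where C: "C \<in> rcosets Q" "card (orbit H \<phi> C) = 1" by blast
  have "C \<in> orbit H \<phi> C" using A.orbit_refl[OF C(1)] .
  moreover obtain c where "orbit H \<phi> C = {c}" using C(2) card_1_singletonE by blast
  ultimately have orbC: "orbit H \<phi> C = {C}" by simp
  have fixC: "\<And>h. h \<in> P \<Longrightarrow> C #> inv h = C"
  proof -
    fix h assume h: "h \<in> P"
    have "\<phi> h C \<in> orbit H \<phi> C" unfolding orbit_def H_def using h by auto
    then show "C #> inv h = C" using orbC C(1) by (simp add: \<phi>_def cosact_def)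
  qed
  obtain g where g: "g \<in> carrier G" "C = Q #> g" using C(1) unfolding RCOSETS_def by blast
  have sub: "(\<lambda>y. g \<otimes> y \<otimes> inv g) ` P \<subseteq> Q"
  proof
    fix z assume "z \<in> (\<lambda>y. g \<otimes> y \<otimes> inv g) ` P"
    then obtain h where h: "h \<in> P" "z = g \<otimes> h \<otimes> inv g" by blast
    have hc: "h \<in> carrier G" "inv h \<in> P" using subgroup.mem_carrier[OF P(1) h(1)] subgroup.m_inv_closed[OF P(1) h(1)] by auto
    have "Q #> g #> inv (inv h) = Q #> g" using fixC[OF hc(2)] g by simp
    then have "Q #> g #> h = Q #> g" using hc by simp
    then have "Q #> (g \<otimes> h) = Q #> g" using g hc Q(1) by (simp add: coset_mult_assoc subgroup.subset)
    moreover have "g \<otimes> h \<in> Q #> (g \<otimes> h)" using rcos_self g hc Q(1) by simp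
    ultimately have "g \<otimes> h \<in> Q #> g" by simp
    then have "g \<otimes> h \<otimes> inv g \<in> Q" using subgroup.rcos_module[OF Q(1) is_group] g hc by simp
    then show "z \<in> Q" using h by simp
  qed
  have "inj_on (\<lambda>y. g \<otimes> y \<otimes> inv g) P"
  proof (rule inj_onI)
    fix y y' assume "y \<in> P" "y' \<in> P" "g \<otimes> y \<otimes> inv g = g \<otimes> y' \<otimes> inv g"
    then show "y = y'" using conjugation_is_inj[OF g(1)] subgroup.mem_carrier[OF P(1)] by blast
  qed
  then have "card ((\<lambda>y. g \<otimes> y \<otimes> inv g) ` P) = card Q" using card_image P(2) Q(2) by metis
  moreover have "finite Q" using fin Q(1) subgroup.subset finite_subset by blast
  ultimately have "(\<lambda>y. g \<otimes> y \<otimes> inv g) ` P = Q" using sub card_subset_eq by blast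
  then show ?thesis using g by blast
qed

lemma inv_cancel1: "g \<in> carrier G \<Longrightarrow> y \<in> carrier G \<Longrightarrow> inv g \<otimes> (g \<otimes> y) = y"
  by (metis inv_solve_left m_closed)
lemma inv_cancel2: "g \<in> carrier G \<Longrightarrow> y \<in> carrier G \<Longrightarrow> g \<otimes> (inv g \<otimes> y) = y"
  by (metis inv_closed inv_solve_left m_closed)

lemma conj_hom: "g \<in> carrier G \<Longrightarrow> (\<lambda>y. g \<otimes> y \<otimes> inv g) \<in> hom G G"
  by (rule homI) (auto simp: m_assoc inv_cancel1)

lemma conj_subgroup:
  assumes "subgroup P G" "g \<in> carrier G"
  shows "subgroup ((\<lambda>y. g \<otimes> y \<otimes> inv g) ` P) G"
proof -
  have "group_hom G G (\<lambda>y. g \<otimes> y \<otimes> inv g)"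
    unfolding group_hom_def group_hom_axioms_def using conj_hom[OF assms(2)] is_group by blast
  then show ?thesis using group_hom.subgroup_img_is_subgroup assms(1) by blast
qed

lemma conj_inj: "g \<in> carrier G \<Longrightarrow> A \<subseteq> carrier G \<Longrightarrow> inj_on (\<lambda>y. g \<otimes> y \<otimes> inv g) A"
  by (rule inj_onI) (meson conjugation_is_inj subsetD)

lemma conj_conj1: "g \<in> carrier G \<Longrightarrow> y \<in> carrier G \<Longrightarrow> inv g \<otimes> (g \<otimes> y \<otimes> inv g) \<otimes> inv (inv g) = y"
  by (simp add: m_assoc inv_cancel1 inv_cancel2)

lemma conj_conj2: "g \<in> carrier G \<Longrightarrow> y \<in> carrier G \<Longrightarrow> g \<otimes> (inv g \<otimes> y \<otimes> inv (inv g)) \<otimes> inv g = y"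
  by (simp add: m_assoc) (metis inv_cancel2)

lemma conj_img_inv:
  assumes "g \<in> carrier G" "A \<subseteq> carrier G"
  shows "(\<lambda>y. inv g \<otimes> y \<otimes> inv (inv g)) ` ((\<lambda>y. g \<otimes> y \<otimes> inv g) ` A) = A"
proof -
  have "(\<lambda>y. inv g \<otimes> y \<otimes> inv (inv g)) ` ((\<lambda>y. g \<otimes> y \<otimes> inv g) ` A) = (\<lambda>y. y) ` A"
    unfolding image_image using assms conj_conj1 by (intro image_cong) auto
  then show ?thesis by simp
qed

lemma conj_img_inv2:
  assumes "g \<in> carrier G" "A \<subseteq> carrier G"
  shows "(\<lambda>y. g \<otimes> y \<otimes> inv g) ` ((\<lambda>y. inv g \<otimes> y \<otimes> inv (inv g)) ` A) = A"
proof -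
  have "(\<lambda>y. g \<otimes> y \<otimes> inv g) ` ((\<lambda>y. inv g \<otimes> y \<otimes> inv (inv g)) ` A) = (\<lambda>y. y) ` A"
    unfolding image_image using assms conj_conj2 by (intro image_cong) auto
  then show ?thesis by simp
qed

lemma conj_class_sub: "x \<in> carrier G \<Longrightarrow> conj_class G x \<subseteq> carrier G"
  unfolding conj_class_def by auto

lemma conj_class_self: "x \<in> carrier G \<Longrightarrow> x \<in> conj_class G x"
  unfolding conj_class_def by (rule CollectI, rule exI[of _ \<one>]) simp

lemma conj_class_img:
  assumes "x \<in> carrier G" "g \<in> carrier G"
  shows "(\<lambda>y. g \<otimes> y \<otimes> inv g) ` conj_class G x = conj_class G x"
proof
  show "(\<lambda>y. g \<otimes> y \<otimes> inv g) ` conj_class G x \<subseteq> conj_class G x"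
  proof
    fix z assume "z \<in> (\<lambda>y. g \<otimes> y \<otimes> inv g) ` conj_class G x"
    then obtain k where k: "k \<in> carrier G" "z = g \<otimes> (k \<otimes> x \<otimes> inv k) \<otimes> inv g"
      unfolding conj_class_def by blast
    have "z = (g \<otimes> k) \<otimes> x \<otimes> inv (g \<otimes> k)"
      using k assms by (simp add: m_assoc inv_mult_group)
    then show "z \<in> conj_class G x" unfolding conj_class_def using k assms by blast
  qed
next
  show "conj_class G x \<subseteq> (\<lambda>y. g \<otimes> y \<otimes> inv g) ` conj_class G x"
  proof
    fix z assume "z \<in> conj_class G x"
    then obtain k where k: "k \<in> carrier G" "z = k \<otimes> x \<otimes> inv k"
      unfolding conj_class_def by blast
    have w: "inv g \<otimes> z \<otimes> inv (inv g) = (inv g \<otimes> k) \<otimes> x \<otimes> inv (inv g \<otimes> k)"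
      using k assms by (simp add: m_assoc inv_mult_group)
    have "inv g \<otimes> z \<otimes> inv (inv g) \<in> conj_class G x"
      unfolding w conj_class_def using k assms by blast
    moreover have "z = g \<otimes> (inv g \<otimes> z \<otimes> inv (inv g)) \<otimes> inv g"
      using conj_conj2 assms k by simp
    ultimately show "z \<in> (\<lambda>y. g \<otimes> y \<otimes> inv g) ` conj_class G x" by blast
  qed
qed

lemma Syl_conj:
  assumes "Q \<in> Syl p G" "g \<in> carrier G"
  shows "(\<lambda>y. g \<otimes> y \<otimes> inv g) ` Q \<in> Syl p G"
proof -
  have Q: "subgroup Q G" "card Q = p ^ multiplicity p (order G)" using assms(1) unfolding Syl_def by auto
  have "card ((\<lambda>y. g \<otimes> y \<otimes> inv g) ` Q) = card Q"
    using card_image conj_inj assms(2) subgroup.subset[OF Q(1)] by metis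
  then show ?thesis using conj_subgroup[OF Q(1) assms(2)] Q(2) unfolding Syl_def by auto
qed

end

lemma (in group) card_inter_Syl:
  assumes fin: "finite (carrier G)" and pr: "Factorial_Ring.prime p"
    and P: "P \<in> Syl p G" and Q: "Q \<in> Syl p G" and x: "x \<in> carrier G"
  shows "card (conj_class G x \<inter> Q) = card (conj_class G x \<inter> P)"
proof -
  have Ps: "subgroup P G" "card P = p ^ multiplicity p (order G)" using P unfolding Syl_def by auto
  have Qs: "subgroup Q G" "card Q = p ^ multiplicity p (order G)" using Q unfolding Syl_def by auto
  obtain g where g: "g \<in> carrier G" "Q = (\<lambda>y. g \<otimes> y \<otimes> inv g) ` P"
    using sylow_conj[OF fin pr Ps Qs] by blast
  let ?f = "\<lambda>y. g \<otimes> y \<otimes> inv g"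
  have inj: "inj_on ?f (carrier G)" using conj_inj[OF g(1)] by simp
  have sub1: "conj_class G x \<subseteq> carrier G" using conj_class_sub[OF x] .
  have sub2: "P \<subseteq> carrier G" using subgroup.subset[OF Ps(1)] .
  have "?f ` (conj_class G x \<inter> P) = ?f ` conj_class G x \<inter> ?f ` P"
    using inj_on_image_Int[OF inj sub1 sub2] .
  also have "\<dots> = conj_class G x \<inter> Q" using conj_class_img[OF x g(1)] g(2) by simp
  finally have e: "?f ` (conj_class G x \<inter> P) = conj_class G x \<inter> Q" .
  have "inj_on ?f (conj_class G x \<inter> P)" using inj sub2 by (meson inf_le2 inj_on_subset order_trans)
  then have "card (?f ` (conj_class G x \<inter> P)) = card (conj_class G x \<inter> P)" by (rule card_image)
  then show ?thesis using e by simp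
qed

lemma (in group) count_same:
  assumes x: "x \<in> carrier G" and y: "y \<in> conj_class G x"
  shows "card {Q \<in> Syl p G. y \<in> Q} = card {Q \<in> Syl p G. x \<in> Q}"
proof -
  obtain k where k: "k \<in> carrier G" "y = k \<otimes> x \<otimes> inv k" using y unfolding conj_class_def by blast
  let ?f = "\<lambda>y. k \<otimes> y \<otimes> inv k"
  let ?h = "\<lambda>y. inv k \<otimes> y \<otimes> inv (inv k)"
  have ik: "inv k \<in> carrier G" using k by simp
  have subS: "\<And>Q. Q \<in> Syl p G \<Longrightarrow> Q \<subseteq> carrier G" unfolding Syl_def using subgroup.subset by blast
  have xy: "x = ?h y" using conj_conj1[OF k(1) x] k(2) by simp
  have "bij_betw (\<lambda>Q. ?f ` Q) {Q \<in> Syl p G. x \<in> Q} {Q \<in> Syl p G. y \<in> Q}"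
  proof (rule bij_betw_byWitness[where f'="\<lambda>Q. ?h ` Q"])
    show "\<forall>a\<in>{Q \<in> Syl p G. x \<in> Q}. ?h ` (?f ` a) = a"
      using conj_img_inv[OF k(1)] subS by blast
    show "\<forall>a\<in>{Q \<in> Syl p G. y \<in> Q}. ?f ` (?h ` a) = a"
      using conj_img_inv2[OF k(1)] subS by blast
    show "(\<lambda>Q. ?f ` Q) ` {Q \<in> Syl p G. x \<in> Q} \<subseteq> {Q \<in> Syl p G. y \<in> Q}"
      using Syl_conj[OF _ k(1)] k(2) by blast
    show "(\<lambda>Q. ?h ` Q) ` {Q \<in> Syl p G. y \<in> Q} \<subseteq> {Q \<in> Syl p G. x \<in> Q}"
      using Syl_conj[OF _ ik] xy by blast
  qed
  then show ?thesis by (simp add: bij_betw_same_card)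
qed

theorem lemma2p6:
  fixes G (structure) and p :: nat and P :: "'a set" and x :: 'a
  assumes "group G" and "finite (carrier G)" and "Factorial_Ring.prime p"
    and "P \<in> Syl p G" and "x \<in> P"
  shows "card (conj_class G x) \<le> card (conj_class G x \<inter> P) * nu p G
       \<and> (card (conj_class G x) = card (conj_class G x \<inter> P) * nu p G
            \<longleftrightarrow> (\<exists>!Q. Q \<in> Syl p G \<and> x \<in> Q))
       \<and> ((\<exists>!Q. Q \<in> Syl p G \<and> x \<in> Q) \<longrightarrow>
            card (conj_class G x) \<ge> nu p G * card (conj_class (G\<lparr>carrier := P\<rparr>) x))"
proof -
  interpret group G by fact
  note fin = assms(2) and pr = assms(3) and P = assms(4)
  have Ps: "subgroup P G" using P unfolding Syl_def by auto
  have x: "x \<in> carrier G" using assms(5) subgroup.subset[OF Ps] by blast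
  define C where "C = conj_class G x"
  define S where "S = Syl p G"
  define n where "n = card {Q \<in> S. x \<in> Q}"
  have finS: "finite S"
  proof -
    have "S \<subseteq> Pow (carrier G)" unfolding S_def Syl_def using subgroup.subset by blast
    then show ?thesis using fin finite_subset by blast
  qed
  have finC: "finite C" using conj_class_sub[OF x] fin finite_subset unfolding C_def by blast
  have xC: "x \<in> C" using conj_class_self[OF x] unfolding C_def .
  have cardC: "card C \<ge> 1" using finC xC
    by (metis One_nat_def Suc_leI card_gt_0_iff empty_iff)
  have npos: "n \<ge> 1"
  proof -
    have "P \<in> {Q \<in> S. x \<in> Q}" using P assms(5) unfolding S_def by blast
    moreover have "finite {Q \<in> S. x \<in> Q}" using finS by simp
    ultimately show ?thesis unfolding n_def
      by (metis One_nat_def Suc_leI card_gt_0_iff empty_iff)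
  qed
  have "(\<Sum>Q\<in>S. card (C \<inter> Q)) = (\<Sum>Q\<in>S. \<Sum>y\<in>C. (if y \<in> Q then 1 else 0::nat))"
  proof (rule sum.cong[OF refl])
    fix Q assume "Q \<in> S"
    show "card (C \<inter> Q) = (\<Sum>y\<in>C. (if y \<in> Q then 1 else 0::nat))"
      by (rule card_as_sums) (auto simp: finC)
  qed
  also have "\<dots> = (\<Sum>y\<in>C. \<Sum>Q\<in>S. (if y \<in> Q then 1 else 0::nat))" by (rule sum.swap)
  also have "\<dots> = (\<Sum>y\<in>C. card {Q \<in> S. y \<in> Q})"
  proof (rule sum.cong[OF refl])
    fix y assume "y \<in> C"
    show "(\<Sum>Q\<in>S. (if y \<in> Q then 1 else 0::nat)) = card {Q \<in> S. y \<in> Q}"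
      by (rule card_as_sums[symmetric]) (auto simp: finS)
  qed
  also have "\<dots> = (\<Sum>y\<in>C. n)"
    unfolding n_def S_def using count_same[OF x] unfolding C_def by (intro sum.cong) auto
  finally have lhs: "(\<Sum>Q\<in>S. card (C \<inter> Q)) = card C * n" by simp
  have "(\<Sum>Q\<in>S. card (C \<inter> Q)) = (\<Sum>Q\<in>S. card (C \<inter> P))"
    unfolding C_def S_def using card_inter_Syl[OF fin pr P _ x] by (intro sum.cong) auto
  then have key: "card C * n = card (C \<inter> P) * nu p G"
    using lhs unfolding nu_def S_def by simp
  have uniq: "n = 1 \<longleftrightarrow> (\<exists>!Q. Q \<in> Syl p G \<and> x \<in> Q)"
  proof -
    have "n = 1 \<longleftrightarrow> (\<exists>Q. {Q \<in> S. x \<in> Q} = {Q})" unfolding n_def using card_1_singleton_iff by simp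
    also have "\<dots> \<longleftrightarrow> (\<exists>!Q. Q \<in> S \<and> x \<in> Q)"
    proof
      assume "\<exists>Q. {Q \<in> S. x \<in> Q} = {Q}"
      then obtain Q where eq: "{Q \<in> S. x \<in> Q} = {Q}" by blast
      have "Q \<in> {Q \<in> S. x \<in> Q}" using eq by simp
      then have q: "Q \<in> S \<and> x \<in> Q" by simp
      have "\<And>Q'. Q' \<in> S \<and> x \<in> Q' \<Longrightarrow> Q' = Q"
      proof -
        fix Q' assume "Q' \<in> S \<and> x \<in> Q'"
        then have "Q' \<in> {Q \<in> S. x \<in> Q}" by simp
        then show "Q' = Q" using eq by simp
      qed
      then show "\<exists>!Q. Q \<in> S \<and> x \<in> Q" using q by (intro ex1I)
    next
      assume "\<exists>!Q. Q \<in> S \<and> x \<in> Q"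
      then obtain Q where q: "Q \<in> S \<and> x \<in> Q" and u: "\<And>Q'. Q' \<in> S \<and> x \<in> Q' \<Longrightarrow> Q' = Q"
        by (elim ex1E) blast
      have "{Q \<in> S. x \<in> Q} = {Q}" using q u by blast
      then show "\<exists>Q. {Q \<in> S. x \<in> Q} = {Q}" by (rule exI)
    qed
    also have "\<dots> \<longleftrightarrow> (\<exists>!Q. Q \<in> Syl p G \<and> x \<in> Q)" unfolding S_def ..
    finally show ?thesis .
  qed
  have part1: "card C \<le> card (C \<inter> P) * nu p G"
    using key npos by (metis mult_le_mono2 nat_mult_1_right)
  have part2: "card C = card (C \<inter> P) * nu p G \<longleftrightarrow> n = 1"
    using key cardC by (metis mult_cancel1 nat_mult_1_right not_one_le_zero)
  have sub: "conj_class (G\<lparr>carrier := P\<rparr>) x \<subseteq> C \<inter> P"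
  proof
    fix z assume "z \<in> conj_class (G\<lparr>carrier := P\<rparr>) x"
    then obtain g where g: "g \<in> P" "z = g \<otimes> x \<otimes> inv\<^bsub>G\<lparr>carrier := P\<rparr>\<^esub> g"
      unfolding conj_class_def by auto
    have gc: "g \<in> carrier G" using g(1) subgroup.subset[OF Ps] by blast
    have z: "z = g \<otimes> x \<otimes> inv g" using g m_inv_consistent[OF Ps g(1)] by simp
    have "z \<in> P" using z g(1) assms(5) Ps
      by (simp add: subgroup.m_closed subgroup.m_inv_closed)
    moreover have "z \<in> C" unfolding C_def conj_class_def using z gc by blast
    ultimately show "z \<in> C \<inter> P" by blast
  qed
  have part3: "card (conj_class (G\<lparr>carrier := P\<rparr>) x) \<le> card (C \<inter> P)"
    using card_mono[OF _ sub] finC by simp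
  show ?thesis
    using part1 part2 uniq part3 unfolding C_def[symmetric]
    by (metis key mult.commute mult_le_mono2 nat_mult_1_right npos)
qed

end
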